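(* Let $M$ be an $n\times n$ complex Hadamard matrix. Let $\Gamma$ be the group of all $n\times n$ complex monomial matrices $P$ with $PMP^\ast=M$, let $\pi\colon\Gamma\to\mathrm{Sym}_n$ send a monomial matrix to its underlying permutation, let $G=\pi(\Gamma)$, and assume $G$ is transitive. Let $\Gamma_{\rm f}=\{L\in\Gamma : \det(L)=1\}$. Then the restriction of $\pi$ to $\Gamma_{\rm f}$ is a surjection $\Gamma_{\rm f}\to G$ whose kernel is the cyclic central subgroup $\langle\zeta_nI_n\rangle$, where $\zeta_n$ is a primitive complex $n$-th root of unity; in particular $|\Gamma_{\rm f}|=n|G|$ is finite. Moreover, $M\in\mathrm{C}(\Gamma)$ and $\mathrm{C}(\Gamma)=\mathrm{C}(\Gamma_{\rm f})$.
   Context: A complex Hadamard matrix of order $n$ has all entries of norm $1$ and satisfies $MM^\ast=nI_n$. A monomial matrix has exactly one nonzero entry in each row and column; it factors as $PD$ with $P$ a permutation matrix and $D$ diagonal, and $\pi$ maps it to $P$. For a matrix group $K$, $\mathrm{C}(K)$ denotes the set of matrices commuting with every element of $K$. ($\Gamma$ is the projection onto the first coordinate of the strong automorphism group $\{(P,P) : PMP^\ast=M\}$ of $M$.) *)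

theory Defs
  imports "HOL-Analysis.Analysis"
begin

text \<open>Square complex matrices of order n = CARD('n), as elements of complex^'n^'n.\<close>

definition conj_transpose :: "complex^'n^'m \<Rightarrow> complex^'m^'n" where
  "conj_transpose A = (\<chi> i j. cnj (A $ j $ i))"

definition complex_hadamard :: "complex^'n^'n \<Rightarrow> bool" where
  "complex_hadamard M \<longleftrightarrow> (\<forall>i j. norm (M $ i $ j) = 1) \<and>
     M ** conj_transpose M = mat (of_nat CARD('n))"

definition monomial_matrix :: "complex^'n^'n \<Rightarrow> bool" where
  "monomial_matrix P \<longleftrightarrow> (\<forall>i. \<exists>!j. P $ i $ j \<noteq> 0) \<and> (\<forall>j. \<exists>!i. P $ i $ j \<noteq> 0)"

text \<open>The underlying permutation: P = (perm matrix of sigma) * D, where the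
  permutation matrix of sigma sends e_j to e_(sigma j); so sigma j is the row of
  the nonzero entry in column j.\<close>
definition perm_of :: "complex^'n^'n \<Rightarrow> ('n \<Rightarrow> 'n)" where
  "perm_of P = (\<lambda>j. THE i. P $ i $ j \<noteq> 0)"

definition aut_group :: "complex^'n^'n \<Rightarrow> (complex^'n^'n) set" where
  "aut_group M = {P. monomial_matrix P \<and> P ** M ** conj_transpose P = M}"

definition centralizer :: "(complex^'n^'n) set \<Rightarrow> (complex^'n^'n) set" where
  "centralizer K = {A. \<forall>B\<in>K. A ** B = B ** A}"

definition primitive_root_of_unity :: "nat \<Rightarrow> complex \<Rightarrow> bool" where
  "primitive_root_of_unity n z \<longleftrightarrow> z ^ n = 1 \<and> (\<forall>k. 0 < k \<and> k < n \<longrightarrow> z ^ k \<noteq> 1)"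

end

theory Submission
  imports Defs
begin

lemma mat_entry: "(mat c :: 'a::zero^'n^'n) $ i $ j = (if i = j then c else 0)"
  by (simp add: mat_def)

lemma mat_mult_entry: "(mat c ** A) $ i $ j = c * A $ i $ j"
  for A :: "'a::comm_ring_1^'m^'n"
proof -
  have "(mat c ** A) $ i $ j = (\<Sum>k\<in>UNIV. if k = i then c * A $ k $ j else 0)"
  proof -
    have "\<And>k. (if i = k then c else 0) * A $ k $ j = (if k = i then c * A $ k $ j else 0)"
      by auto
    then show ?thesis unfolding matrix_matrix_mult_def mat_def by simp
  qed
  then show ?thesis by simp
qed

lemma mult_mat_entry: "(A ** mat c) $ i $ j = A $ i $ j * c"
  for A :: "'a::comm_ring_1^'m^'n"
proof -
  have "\<And>k. A $ i $ k * (if k = j then c else 0) = (if k = j then A $ i $ k * c else 0)"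
    by auto
  then show ?thesis unfolding matrix_matrix_mult_def mat_def by simp
qed

lemma mat_comm: "mat c ** A = A ** mat c"
  for A :: "'a::comm_ring_1^'n^'n"
  by (simp add: vec_eq_iff mat_mult_entry mult_mat_entry mult.commute)

lemma ct_entry: "conj_transpose A $ i $ j = cnj (A $ j $ i)"
  by (simp add: conj_transpose_def)

lemma ct_mat: "conj_transpose (mat c :: complex^'n^'n) = mat (cnj c)"
  by (simp add: vec_eq_iff ct_entry mat_entry)

lemma det_ct: "det (conj_transpose A) = cnj (det (A::complex^'n^'n))"
proof -
  have "conj_transpose A = transpose (\<chi> i j. cnj (A $ i $ j))"
    by (simp add: vec_eq_iff ct_entry transpose_def)
  then have "det (conj_transpose A) = det (\<chi> i j. cnj (A $ i $ j))" by simp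
  also have "\<dots> = cnj (det A)"
    unfolding det_def by (simp add: cnj_sum cnj_prod)
  finally show ?thesis .
qed

lemma det_mat: "det (mat c :: 'a::comm_ring_1^'n^'n) = c ^ CARD('n)"
  by (subst det_diagonal) (auto simp: mat_entry)

lemma det_scal: "det (mat c ** A) = c ^ CARD('n) * det (A :: 'a::comm_ring_1^'n^'n)"
  by (simp add: det_mul det_mat)

definition rc :: "complex^'n^'n \<Rightarrow> 'n \<Rightarrow> 'n" where
  "rc P i = (THE j. P $ i $ j \<noteq> 0)"

lemma rc_ex1: "monomial_matrix P \<Longrightarrow> \<exists>!j. P $ i $ j \<noteq> 0"
  unfolding monomial_matrix_def by blast

lemma perm_ex1: "monomial_matrix P \<Longrightarrow> \<exists>!i. P $ i $ j \<noteq> 0"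
  unfolding monomial_matrix_def by blast

lemma rc_nz: "monomial_matrix P \<Longrightarrow> P $ i $ rc P i \<noteq> 0"
  unfolding rc_def by (rule theI'[OF rc_ex1])

lemma rc_iff: "monomial_matrix P \<Longrightarrow> P $ i $ j \<noteq> 0 \<longleftrightarrow> j = rc P i"
proof
  assume m: "monomial_matrix P" and "P $ i $ j \<noteq> 0"
  then show "j = rc P i" unfolding rc_def by (rule the1_equality[OF rc_ex1, symmetric])
next
  assume m: "monomial_matrix P" and "j = rc P i"
  then show "P $ i $ j \<noteq> 0" using rc_nz[OF m] by simp
qed

lemma perm_nz: "monomial_matrix P \<Longrightarrow> P $ perm_of P j $ j \<noteq> 0"
  unfolding perm_of_def by (rule theI'[OF perm_ex1])

lemma perm_iff: "monomial_matrix P \<Longrightarrow> P $ i $ j \<noteq> 0 \<longleftrightarrow> i = perm_of P j"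
proof
  assume m: "monomial_matrix P" and "P $ i $ j \<noteq> 0"
  then show "i = perm_of P j" unfolding perm_of_def by (rule the1_equality[OF perm_ex1, symmetric])
next
  assume m: "monomial_matrix P" and "i = perm_of P j"
  then show "P $ i $ j \<noteq> 0" using perm_nz[OF m] by simp
qed

lemma rc_inj: "monomial_matrix P \<Longrightarrow> rc P i = rc P i' \<Longrightarrow> i = i'"
proof -
  assume m: "monomial_matrix P" and e: "rc P i = rc P i'"
  have "i = perm_of P (rc P i)" using rc_nz[OF m, of i] perm_iff[OF m] by blast
  moreover have "i' = perm_of P (rc P i')" using rc_nz[OF m, of i'] perm_iff[OF m] by blast
  ultimately show ?thesis using e by simp
qed

lemma mult_left: "monomial_matrix P \<Longrightarrow> (P ** A) $ i $ j = P $ i $ rc P i * A $ rc P i $ j"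
proof -
  assume m: "monomial_matrix P"
  have "(P ** A) $ i $ j = (\<Sum>k\<in>UNIV. P $ i $ k * A $ k $ j)"
    by (simp add: matrix_matrix_mult_def)
  also have "\<dots> = (\<Sum>k\<in>UNIV. if k = rc P i then P $ i $ k * A $ k $ j else 0)"
    by (rule sum.cong) (use rc_iff[OF m] in auto)
  also have "\<dots> = P $ i $ rc P i * A $ rc P i $ j" by simp
  finally show ?thesis .
qed

lemma mult_right_ct: "monomial_matrix P \<Longrightarrow>
   (A ** conj_transpose P) $ i $ j = A $ i $ rc P j * cnj (P $ j $ rc P j)"
proof -
  assume m: "monomial_matrix P"
  have "(A ** conj_transpose P) $ i $ j = (\<Sum>k\<in>UNIV. A $ i $ k * cnj (P $ j $ k))"
    by (simp add: matrix_matrix_mult_def ct_entry)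
  also have "\<dots> = (\<Sum>k\<in>UNIV. if k = rc P j then A $ i $ k * cnj (P $ j $ k) else 0)"
    by (rule sum.cong) (use rc_iff[OF m] in auto)
  also have "\<dots> = A $ i $ rc P j * cnj (P $ j $ rc P j)" by simp
  finally show ?thesis .
qed

lemma aut_mono: "P \<in> aut_group M \<Longrightarrow> monomial_matrix P"
  by (simp add: aut_group_def)

lemma aut_eq: "P \<in> aut_group M \<Longrightarrow> P ** M ** conj_transpose P = M"
  by (simp add: aut_group_def)

lemma aut_entry:
  assumes "P \<in> aut_group M"
  shows "M $ i $ j = P $ i $ rc P i * M $ rc P i $ rc P j * cnj (P $ j $ rc P j)"
proof -
  have m: "monomial_matrix P" using assms by (rule aut_mono)
  have "M $ i $ j = (P ** M ** conj_transpose P) $ i $ j" using aut_eq[OF assms] by simp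
  also have "\<dots> = P $ i $ rc P i * M $ rc P i $ rc P j * cnj (P $ j $ rc P j)"
    by (simp add: mult_right_ct[OF m] mult_left[OF m])
  finally show ?thesis .
qed

lemma aut_norm:
  assumes h: "complex_hadamard M" and P: "P \<in> aut_group M"
  shows "norm (P $ i $ rc P i) = 1"
proof -
  have "norm (M $ i $ i) = norm (P $ i $ rc P i * M $ rc P i $ rc P i * cnj (P $ i $ rc P i))"
    using aut_entry[OF P] by metis
  then have "1 = norm (P $ i $ rc P i) * norm (P $ i $ rc P i)"
    using h by (simp add: complex_hadamard_def norm_mult)
  then have "norm (P $ i $ rc P i) ^ 2 = 1" by (simp add: power2_eq_square)
  then show ?thesis using norm_ge_zero[of "P $ i $ rc P i"] by (auto simp: power2_eq_1_iff)
qed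

lemma aut_unitary:
  assumes h: "complex_hadamard M" and P: "P \<in> aut_group M"
  shows "P ** conj_transpose P = mat 1"
proof -
  have m: "monomial_matrix P" using P by (rule aut_mono)
  show ?thesis
    unfolding vec_eq_iff
  proof (intro allI)
    fix i j
    show "(P ** conj_transpose P) $ i $ j = mat 1 $ i $ j"
    proof (cases "i = j")
      case True
      have "P $ j $ rc P j * cnj (P $ j $ rc P j) = of_real ((norm (P $ j $ rc P j))\<^sup>2)"
        by (rule complex_norm_square[symmetric])
      also have "\<dots> = 1" using aut_norm[OF h P] by simp
      finally show ?thesis using True by (simp add: mult_right_ct[OF m] mat_entry)
    next
      case False
      then have "rc P j \<noteq> rc P i" using rc_inj[OF m] by metis
      then have "P $ i $ rc P j = 0" using rc_iff[OF m] by blast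
      then show ?thesis using False by (simp add: mult_right_ct[OF m] mat_entry)
    qed
  qed
qed

lemma aut_comm:
  assumes h: "complex_hadamard M" and P: "P \<in> aut_group M"
  shows "P ** M = M ** P"
proof -
  have "conj_transpose P ** P = mat 1"
    using aut_unitary[OF h P] matrix_left_right_inverse by blast
  then have "P ** M = P ** M ** conj_transpose P ** P"
    by (simp add: matrix_mul_assoc[symmetric] matrix_mul_rid)
  also have "\<dots> = M ** P" using aut_eq[OF P] by simp
  finally show ?thesis .
qed

lemma had_det_nz:
  assumes h: "complex_hadamard M"
  shows "det M \<noteq> 0"
proof
  assume "det M = 0"
  then have "det (M ** conj_transpose M) = 0" by (simp add: det_mul)
  then have "det (mat (of_nat CARD('a)) :: complex^'a^'a) = 0"
    using h by (simp add: complex_hadamard_def)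
  then show False by (simp add: det_mat)
qed

lemma aut_det:
  assumes h: "complex_hadamard M" and P: "P \<in> aut_group M"
  shows "norm (det P) = 1"
proof -
  have "det P * det M * cnj (det P) = det M"
    using arg_cong[OF aut_eq[OF P], of det] by (simp add: det_mul det_ct)
  then have "det P * cnj (det P) = 1" using had_det_nz[OF h]
    by (metis (no_types, lifting) mult.commute mult.left_commute mult_cancel_left2)
  then have "of_real ((norm (det P))\<^sup>2) = (1::complex)" by (metis complex_norm_square)
  then have "(norm (det P))\<^sup>2 = 1" by (metis of_real_eq_1_iff)
  then show ?thesis using norm_ge_zero[of "det P"] by (auto simp: power2_eq_1_iff)
qed

lemma mono_scal:
  assumes "c \<noteq> 0"
  shows "monomial_matrix (mat c ** P) \<longleftrightarrow> monomial_matrix P"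
  using assms by (simp add: monomial_matrix_def mat_mult_entry)

lemma perm_scal:
  assumes "c \<noteq> 0"
  shows "perm_of (mat c ** P) = perm_of P"
  using assms by (simp add: perm_of_def mat_mult_entry)

lemma mat1_mono: "monomial_matrix (mat 1 :: complex^'n^'n)"
  by (simp add: monomial_matrix_def mat_entry)

lemma mat1_perm: "perm_of (mat 1 :: complex^'n^'n) = id"
  by (simp add: perm_of_def mat_entry fun_eq_iff)

lemma mat1_aut: "(mat 1 :: complex^'n^'n) \<in> aut_group M"
  by (simp add: aut_group_def mat1_mono ct_mat matrix_mul_lid matrix_mul_rid)

lemma ct_scal: "conj_transpose (mat c ** P) = conj_transpose P ** mat (cnj c)"
  for P :: "complex^'n^'n"
  by (simp add: vec_eq_iff ct_entry mat_mult_entry mult_mat_entry mult.commute)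

lemma scal_aut:
  assumes P: "P \<in> aut_group M" and c: "norm c = 1"
  shows "mat c ** P \<in> aut_group M"
proof -
  have c0: "c \<noteq> 0" using c by auto
  have "mat c ** P ** M ** conj_transpose (mat c ** P)
      = mat c ** (P ** M ** conj_transpose P) ** mat (cnj c)"
    by (simp add: ct_scal matrix_mul_assoc)
  also have "\<dots> = mat c ** M ** mat (cnj c)" using aut_eq[OF P] by simp
  also have "\<dots> = M"
  proof -
    have "c * cnj c = 1" using c complex_norm_square[of c] by simp
    then show ?thesis
      by (simp add: vec_eq_iff mat_mult_entry mult_mat_entry mult.commute mult.left_commute)
  qed
  moreover have "monomial_matrix (mat c ** P)" using mono_scal[OF c0, of P] aut_mono[OF P] by simp
  ultimately show ?thesis by (simp add: aut_group_def)
qed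

lemma fiber:
  assumes h: "complex_hadamard M" and L: "L \<in> aut_group M" and K: "K \<in> aut_group M"
    and pe: "perm_of L = perm_of K"
  shows "\<exists>c. norm c = 1 \<and> L = mat c ** K"
proof -
  have mL: "monomial_matrix L" using L by (rule aut_mono)
  have mK: "monomial_matrix K" using K by (rule aut_mono)
  have rce: "rc L i = rc K i" for i
  proof -
    have "i = perm_of L (rc L i)" using rc_nz[OF mL, of i] perm_iff[OF mL] by blast
    then have "i = perm_of K (rc L i)" using pe by simp
    then have "K $ i $ rc L i \<noteq> 0" using perm_iff[OF mK] by blast
    then show ?thesis using rc_iff[OF mK] by blast
  qed
  define r where "r = rc K"
  define pL where "pL i = L $ i $ r i" for i
  define pK where "pK i = K $ i $ r i" for i
  have nL: "norm (pL i) = 1" for i using aut_norm[OF h L, of i] rce by (simp add: pL_def r_def)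
  have nK: "norm (pK i) = 1" for i using aut_norm[OF h K, of i] by (simp add: pK_def r_def)
  have key: "pL i * cnj (pL j) = pK i * cnj (pK j)" for i j
  proof -
    have e1: "M $ i $ j = pL i * M $ r i $ r j * cnj (pL j)"
      using aut_entry[OF L, of i j] rce by (simp add: pL_def r_def)
    have e2: "M $ i $ j = pK i * M $ r i $ r j * cnj (pK j)"
      using aut_entry[OF K, of i j] by (simp add: pK_def r_def)
    have nz: "M $ r i $ r j \<noteq> 0" using h unfolding complex_hadamard_def
      by (metis norm_zero zero_neq_one)
    have "(pL i * cnj (pL j)) * M $ r i $ r j = pL i * M $ r i $ r j * cnj (pL j)"
      by (simp add: ac_simps)
    also have "\<dots> = pK i * M $ r i $ r j * cnj (pK j)" by (rule trans[OF e1[symmetric] e2])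
    also have "\<dots> = (pK i * cnj (pK j)) * M $ r i $ r j" by (simp add: ac_simps)
    finally show ?thesis using nz by simp
  qed
  define i0 :: 'a where "i0 = undefined"
  define c where "c = pL i0 * cnj (pK i0)"
  have cn: "norm c = 1" using nL nK by (simp add: c_def norm_mult)
  have uK: "cnj (pK i0) * pK i0 = 1"
    using complex_norm_square[of "pK i0"] nK by (simp add: mult.commute)
  have pLc: "pL i = c * pK i" for i
  proof -
    have u: "cnj (pL i0) * pL i0 = 1"
      using complex_norm_square[of "pL i0"] nL by (simp add: mult.commute)
    have "pL i = pL i * (cnj (pL i0) * pL i0)" using u by simp
    also have "\<dots> = (pL i * cnj (pL i0)) * pL i0" by (simp add: mult.assoc)
    also have "\<dots> = (pK i * cnj (pK i0)) * pL i0" using key[of i i0] by simp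
    also have "\<dots> = c * pK i" by (simp add: c_def ac_simps)
    finally show ?thesis .
  qed
  have "L = mat c ** K"
    unfolding vec_eq_iff
  proof (intro allI)
    fix i j
    show "L $ i $ j = (mat c ** K) $ i $ j"
    proof (cases "j = r i")
      case True
      then show ?thesis using pLc[of i] by (simp add: mat_mult_entry pL_def pK_def)
    next
      case False
      then have "L $ i $ j = 0" "K $ i $ j = 0"
        using rc_iff[OF mL, of i j] rc_iff[OF mK, of i j] rce by (auto simp: r_def)
      then show ?thesis by (simp add: mat_mult_entry)
    qed
  qed
  then show ?thesis using cn by blast
qed

lemma normalize:
  assumes h: "complex_hadamard M" and P: "(P::complex^'n^'n) \<in> aut_group M"
  shows "\<exists>c. norm c = 1 \<and> mat c ** P \<in> aut_group M \<and> det (mat c ** P) = 1"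
proof -
  have nd: "norm (det P) = 1" using aut_det[OF h P] .
  then have d0: "det P \<noteq> 0" by auto
  have "card {z::complex. z ^ CARD('n) = inverse (det P)} = CARD('n)"
    using d0 by (intro card_nth_roots) auto
  then have "{z::complex. z ^ CARD('n) = inverse (det P)} \<noteq> {}"
    by (metis card.empty less_irrefl zero_less_card_finite)
  then obtain c where c: "c ^ CARD('n) = inverse (det P)" by auto
  have "norm c ^ CARD('n) = 1" using arg_cong[OF c, of norm] nd by (simp add: norm_power norm_inverse)
  then have cn: "norm c = 1" using power_eq_1_iff[of "norm c" "CARD('n)"] by simp
  have "det (mat c ** P) = 1" using c d0 by (simp add: det_scal)
  then show ?thesis using scal_aut[OF P cn] cn by blast
qed

lemma roots_prim:
  assumes pr: "primitive_root_of_unity n \<zeta>" and n: "n > 0" and c: "c ^ n = (1::complex)"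
  shows "\<exists>k. c = \<zeta> ^ k"
proof -
  have z0: "\<zeta> \<noteq> 0" using pr n unfolding primitive_root_of_unity_def by (auto simp: power_0_left)
  have inj: "inj_on (\<lambda>k. \<zeta> ^ k) {..<n}"
  proof (rule inj_onI)
    fix a b assume a: "a \<in> {..<n}" and b: "b \<in> {..<n}" and e: "\<zeta> ^ a = \<zeta> ^ b"
    show "a = b"
    proof (rule ccontr)
      assume "a \<noteq> b"
      then consider "a < b" | "b < a" by linarith
      then show False
      proof cases
        case 1
        have "\<zeta> ^ b = \<zeta> ^ a * \<zeta> ^ (b - a)" using 1 by (simp add: power_add[symmetric])
        then have "\<zeta> ^ (b - a) = 1" using e z0 by simp
        then show False using pr 1 b unfolding primitive_root_of_unity_def by auto
      next
        case 2
        have "\<zeta> ^ a = \<zeta> ^ b * \<zeta> ^ (a - b)" using 2 by (simp add: power_add[symmetric])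
        then have "\<zeta> ^ (a - b) = 1" using e z0 by simp
        then show False using pr 2 a unfolding primitive_root_of_unity_def by auto
      qed
    qed
  qed
  have sub: "(\<lambda>k. \<zeta> ^ k) ` {..<n} \<subseteq> {z::complex. z ^ n = 1}"
  proof
    fix z assume "z \<in> (\<lambda>k. \<zeta> ^ k) ` {..<n}"
    then obtain k where "z = \<zeta> ^ k" by auto
    then have "z ^ n = (\<zeta> ^ n) ^ k" by (simp add: power_mult[symmetric] mult.commute)
    then show "z \<in> {z::complex. z ^ n = 1}" using pr unfolding primitive_root_of_unity_def by simp
  qed
  have "card ((\<lambda>k. \<zeta> ^ k) ` {..<n}) = card {z::complex. z ^ n = 1}"
    using card_image[OF inj] card_roots_unity_eq[OF n] by simp
  then have "(\<lambda>k. \<zeta> ^ k) ` {..<n} = {z::complex. z ^ n = 1}"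
    using sub n by (intro card_subset_eq finite_roots_unity) auto
  then show ?thesis using c by blast
qed

theorem proposition6p1:
  fixes M :: "complex^'n^'n"
  defines "\<Gamma> \<equiv> aut_group M"
  defines "G \<equiv> perm_of ` \<Gamma>"
  defines "\<Gamma>f \<equiv> {L \<in> \<Gamma>. det L = 1}"
  assumes hadamard: "complex_hadamard M"
    and transitive: "\<forall>i j. \<exists>\<sigma>\<in>G. \<sigma> i = j"
  shows "perm_of ` \<Gamma>f = G
    \<and> (\<forall>\<zeta>. primitive_root_of_unity CARD('n) \<zeta> \<longrightarrow>
          {L \<in> \<Gamma>f. perm_of L = id} = {mat (\<zeta> ^ k) | k::nat. True})
    \<and> (\<forall>L\<in>\<Gamma>f. \<forall>K\<in>\<Gamma>f. perm_of L = id \<longrightarrow> L ** K = K ** L)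
    \<and> finite \<Gamma>f \<and> card \<Gamma>f = CARD('n) * card G
    \<and> M \<in> centralizer \<Gamma> \<and> centralizer \<Gamma> = centralizer \<Gamma>f"
proof -
  let ?n = "CARD('n)"
  have n0: "0 < ?n" by simp
  have Gf_sub: "\<Gamma>f \<subseteq> \<Gamma>" by (auto simp: \<Gamma>f_def)
  have kernel: "\<exists>c. norm c = 1 \<and> L = mat c" if L: "L \<in> \<Gamma>" and p: "perm_of L = id" for L
  proof -
    have "perm_of L = perm_of (mat 1 :: complex^'n^'n)" using p by (simp add: mat1_perm)
    then obtain c where "norm c = 1" "L = mat c ** mat 1"
      using fiber[OF hadamard L[unfolded \<Gamma>_def] mat1_aut[of M]] by blast
    then show ?thesis by (auto simp: matrix_mul_rid)
  qed
  have part1: "perm_of ` \<Gamma>f = G"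
  proof
    show "perm_of ` \<Gamma>f \<subseteq> G" using Gf_sub by (auto simp: G_def)
    show "G \<subseteq> perm_of ` \<Gamma>f"
    proof
      fix \<sigma> assume "\<sigma> \<in> G"
      then obtain P where P: "P \<in> \<Gamma>" "\<sigma> = perm_of P" by (auto simp: G_def)
      obtain c where c: "norm c = 1" "mat c ** P \<in> aut_group M" "det (mat c ** P) = 1"
        using normalize[OF hadamard, of P] P(1) by (auto simp: \<Gamma>_def)
      have "c \<noteq> 0" using c(1) by auto
      then have "perm_of (mat c ** P) = \<sigma>" using perm_scal[of c P] P(2) by auto
      moreover have "mat c ** P \<in> \<Gamma>f" using c by (simp add: \<Gamma>f_def \<Gamma>_def)
      ultimately show "\<sigma> \<in> perm_of ` \<Gamma>f" by (metis image_eqI)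
    qed
  qed
  have part2: "\<forall>\<zeta>. primitive_root_of_unity ?n \<zeta> \<longrightarrow>
          {L \<in> \<Gamma>f. perm_of L = id} = {mat (\<zeta> ^ k) | k::nat. True}"
  proof (intro allI impI)
    fix \<zeta> assume pr: "primitive_root_of_unity ?n \<zeta>"
    have zn: "norm \<zeta> = 1" using pr power_eq_1_iff[of \<zeta> ?n] by (auto simp: primitive_root_of_unity_def)
    show "{L \<in> \<Gamma>f. perm_of L = id} = {mat (\<zeta> ^ k) | k::nat. True}"
    proof (intro equalityI subsetI)
      fix L assume "L \<in> {L \<in> \<Gamma>f. perm_of L = id}"
      then have L: "L \<in> \<Gamma>" "det L = 1" "perm_of L = id" by (auto simp: \<Gamma>f_def)
      obtain c where c: "norm c = 1" "L = mat c" using kernel L by blast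
      have "c ^ ?n = 1" using L(2) c(2) by (simp add: det_mat)
      then obtain k where "c = \<zeta> ^ k" using roots_prim[OF pr n0] by blast
      then show "L \<in> {mat (\<zeta> ^ k) | k::nat. True}" using c by auto
    next
      fix L :: "complex^'n^'n" assume "L \<in> {mat (\<zeta> ^ k) | k::nat. True}"
      then obtain k where k: "L = mat (\<zeta> ^ k)" by auto
      have nk: "norm (\<zeta> ^ k) = 1" using zn by (simp add: norm_power)
      have e: "L = mat (\<zeta> ^ k) ** mat 1" using k by (simp add: matrix_mul_rid)
      have "L \<in> aut_group M" using scal_aut[OF mat1_aut nk] e by simp
      moreover have "det L = 1"
      proof -
        have "(\<zeta> ^ k) ^ ?n = (\<zeta> ^ ?n) ^ k" by (simp add: power_mult[symmetric] mult.commute)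
        then show ?thesis using k pr by (simp add: det_mat primitive_root_of_unity_def)
      qed
      moreover have "perm_of L = id"
      proof -
        have "\<zeta> ^ k \<noteq> 0" using nk by (metis norm_zero zero_neq_one)
        then show ?thesis using e perm_scal[of "\<zeta>^k" "mat 1 :: complex^'n^'n"] by (simp add: mat1_perm)
      qed
      ultimately show "L \<in> {L \<in> \<Gamma>f. perm_of L = id}" by (simp add: \<Gamma>f_def \<Gamma>_def)
    qed
  qed
  have part3: "\<forall>L\<in>\<Gamma>f. \<forall>K\<in>\<Gamma>f. perm_of L = id \<longrightarrow> L ** K = K ** L"
  proof (intro ballI impI)
    fix L K assume L: "L \<in> \<Gamma>f" and "K \<in> \<Gamma>f" and p: "perm_of L = id"
    obtain c where "L = mat c" using kernel[of L] L Gf_sub p by blast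
    then show "L ** K = K ** L" by (simp add: mat_comm)
  qed
  have finG: "finite G" by (rule finite_subset[OF subset_UNIV]) simp
  have fib: "finite {L\<in>\<Gamma>f. perm_of L = \<sigma>} \<and> card {L\<in>\<Gamma>f. perm_of L = \<sigma>} = ?n"
    if "\<sigma> \<in> G" for \<sigma>
  proof -
    obtain K where K: "K \<in> \<Gamma>f" "perm_of K = \<sigma>" using part1 \<open>\<sigma> \<in> G\<close> by auto
    have KG: "K \<in> aut_group M" "det K = 1" using K by (auto simp: \<Gamma>f_def \<Gamma>_def)
    have eq: "{L\<in>\<Gamma>f. perm_of L = \<sigma>} = (\<lambda>c. mat c ** K) ` {c. c ^ ?n = 1}"
    proof (intro equalityI subsetI)
      fix L assume "L \<in> {L\<in>\<Gamma>f. perm_of L = \<sigma>}"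
      then have L: "L \<in> aut_group M" "det L = 1" "perm_of L = perm_of K"
        using K by (auto simp: \<Gamma>f_def \<Gamma>_def)
      obtain c where c: "norm c = 1" "L = mat c ** K"
        using fiber[OF hadamard L(1) KG(1) L(3)] by blast
      have "c ^ ?n = 1" using L(2) KG(2) c(2) by (simp add: det_scal)
      then show "L \<in> (\<lambda>c. mat c ** K) ` {c. c ^ ?n = 1}" using c(2) by blast
    next
      fix L assume "L \<in> (\<lambda>c. mat c ** K) ` {c. c ^ ?n = 1}"
      then obtain c where c: "c ^ ?n = 1" "L = mat c ** K" by blast
      have cn: "norm c = 1" using power_eq_1_iff[of c ?n] c(1) by auto
      have "L \<in> aut_group M" using scal_aut[OF KG(1) cn] c(2) by simp
      moreover have "det L = 1" using c KG(2) by (simp add: det_scal)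
      moreover have "perm_of L = \<sigma>"
      proof -
        have "c \<noteq> 0" using cn by (metis norm_zero zero_neq_one)
        then show ?thesis using perm_scal[of c K] c(2) K(2) by auto
      qed
      ultimately show "L \<in> {L\<in>\<Gamma>f. perm_of L = \<sigma>}" by (simp add: \<Gamma>f_def \<Gamma>_def)
    qed
    have inj: "inj_on (\<lambda>c. mat c ** K) {c. c ^ ?n = 1}"
    proof (rule inj_onI)
      fix c d assume e: "mat c ** K = mat d ** K"
      define i0 :: 'n where "i0 = undefined"
      have "c * K $ i0 $ rc K i0 = d * K $ i0 $ rc K i0" using e by (metis mat_mult_entry)
      moreover have "K $ i0 $ rc K i0 \<noteq> 0" using rc_nz aut_mono[OF KG(1)] by blast
      ultimately show "c = d" by auto
    qed
    have finR: "finite {c::complex. c ^ ?n = 1}"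
      using card_roots_unity_eq[OF n0] n0 by (intro card_ge_0_finite) simp
    show ?thesis using eq card_image[OF inj] card_roots_unity_eq[OF n0] finR
      by auto
  qed
  have Gf_un: "\<Gamma>f = (\<Union>\<sigma>\<in>G. {L\<in>\<Gamma>f. perm_of L = \<sigma>})" using part1 by auto
  have finGf: "finite \<Gamma>f" using Gf_un finG fib by (metis (no_types, lifting) finite_UN_I)
  have cardGf: "card \<Gamma>f = ?n * card G"
  proof -
    have "card \<Gamma>f = (\<Sum>\<sigma>\<in>G. card {L\<in>\<Gamma>f. perm_of L = \<sigma>})"
      by (subst Gf_un, rule card_UN_disjoint) (use finG fib in auto)
    also have "\<dots> = (\<Sum>\<sigma>\<in>G. ?n)" using fib by simp
    finally show ?thesis by simp
  qed
  have part5: "M \<in> centralizer \<Gamma>"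
    using aut_comm[OF hadamard] by (auto simp: centralizer_def \<Gamma>_def)
  have part6: "centralizer \<Gamma> = centralizer \<Gamma>f"
  proof
    show "centralizer \<Gamma> \<subseteq> centralizer \<Gamma>f" using Gf_sub by (auto simp: centralizer_def)
    show "centralizer \<Gamma>f \<subseteq> centralizer \<Gamma>"
    proof (intro subsetI)
      fix A assume A: "A \<in> centralizer \<Gamma>f"
      show "A \<in> centralizer \<Gamma>" unfolding centralizer_def
      proof (intro CollectI ballI)
        fix P assume P: "P \<in> \<Gamma>"
        obtain c where c: "norm c = 1" "mat c ** P \<in> aut_group M" "det (mat c ** P) = 1"
          using normalize[OF hadamard, of P] P by (auto simp: \<Gamma>_def)
        define L where "L = mat c ** P"
        have L: "L \<in> \<Gamma>f" using c by (simp add: \<Gamma>f_def \<Gamma>_def L_def)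
        have c0: "c \<noteq> 0" using c by auto
        have Pe: "P = mat (inverse c) ** L"
          using c0 by (simp add: vec_eq_iff mat_mult_entry L_def)
        have "A ** P = A ** (mat (inverse c) ** L)" using Pe by simp
        also have "\<dots> = mat (inverse c) ** (A ** L)" by (metis matrix_mul_assoc mat_comm)
        also have "\<dots> = mat (inverse c) ** (L ** A)" using A L by (simp add: centralizer_def)
        also have "\<dots> = P ** A" using Pe by (simp add: matrix_mul_assoc)
        finally show "A ** P = P ** A" .
      qed
    qed
  qed
  show ?thesis using part1 part2 part3 finGf cardGf part5 part6 by blast
qed

end
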